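(* Consider the discrete all-pay auction in the model without ties, with values drawn i.i.d. from a distribution with full support on $X$. Let $\beta$ be a symmetric equilibrium bidding function, let $v\in X$ with $v+1\in X$, and let $b=\beta(v)$. Then $\beta(v+1)\le b+1$.
   Context: Model. There are $n\ge 2$ risk-neutral bidders competing for one indivisible object. Normalise the grid so that values and bids lie in $X=\{0,1,2,\dots,x\}$ for some $x\in\mathbb N$. Each bidder $i$ privately learns a value $v_i\in X$; values are drawn independently from a common distribution in which every element of $X$ has strictly positive probability. Each bidder submits a bid $b_i\in X$. A (pure) strategy is a bidding function $\beta:X\to X$. In the model without ties, bidder $i$ wins iff $b_i>b_j$ for all $j\neq i$ (if the highest bid is tied, nobody wins). In the all-pay auction, a bidder with value $v_i$ bidding $b_i$ gets expected payoff $v_i\Pr(i\text{ wins})-b_i$ (everyone pays their bid). An equilibrium is a profile of bidding functions such that each bidder's bidding function maximises their expected payoff given the others' bidding functions (a pure-strategy Bayes–Nash equilibrium) and such that no bidder uses a weakly dominated bidding function (a bidding function is weakly dominated if some other bidding function yields at least as high expected payoff against every profile of opponents' bidding functions, and strictly higher against some). A symmetric equilibrium (SE) is an equilibrium in which all bidders use the same bidding function $\beta$. *)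

theory Defs
  imports Complex_Main
begin

text \<open>Grid X = {0..x}.
  A bidding function is beta :: nat => nat with beta v in X for v in X
  (values outside X are irrelevant). There are n bidders; from the point of view
  of one bidder the m = n - 1 opponents use bidding functions gs j, j < m.\<close>

definition is_bid_fn :: "nat \<Rightarrow> (nat \<Rightarrow> nat) \<Rightarrow> bool" where
  "is_bid_fn x \<beta> \<longleftrightarrow> (\<forall>v\<le>x. \<beta> v \<le> x)"

definition is_opp_profile :: "nat \<Rightarrow> nat \<Rightarrow> (nat \<Rightarrow> nat \<Rightarrow> nat) \<Rightarrow> bool" where
  "is_opp_profile x m gs \<longleftrightarrow> (\<forall>j<m. is_bid_fn x (gs j))"

text \<open>Probability that a bid b strictly beats every opponent (model without ties;
  values independent).\<close>
definition win_prob :: "(nat \<Rightarrow> real) \<Rightarrow> nat \<Rightarrow> nat \<Rightarrow> (nat \<Rightarrow> nat \<Rightarrow> nat) \<Rightarrow> nat \<Rightarrow> real" where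
  "win_prob p x m gs b = (\<Prod>j<m. sum p {w \<in> {0..x}. gs j w < b})"

definition allpay_payoff :: "(nat \<Rightarrow> real) \<Rightarrow> nat \<Rightarrow> nat \<Rightarrow> (nat \<Rightarrow> nat) \<Rightarrow> (nat \<Rightarrow> nat \<Rightarrow> nat) \<Rightarrow> real" where
  "allpay_payoff p x m \<beta> gs =
     (\<Sum>v\<le>x. p v * (real v * win_prob p x m gs (\<beta> v) - real (\<beta> v)))"

definition weakly_dominated :: "(nat \<Rightarrow> real) \<Rightarrow> nat \<Rightarrow> nat \<Rightarrow> (nat \<Rightarrow> nat) \<Rightarrow> bool" where
  "weakly_dominated p x m \<beta> \<longleftrightarrow>
     (\<exists>\<beta>'. is_bid_fn x \<beta>' \<and>
        (\<forall>gs. is_opp_profile x m gs \<longrightarrow> allpay_payoff p x m \<beta>' gs \<ge> allpay_payoff p x m \<beta> gs) \<and>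
        (\<exists>gs. is_opp_profile x m gs \<and> allpay_payoff p x m \<beta>' gs > allpay_payoff p x m \<beta> gs))"

definition symmetric_eq :: "(nat \<Rightarrow> real) \<Rightarrow> nat \<Rightarrow> nat \<Rightarrow> (nat \<Rightarrow> nat) \<Rightarrow> bool" where
  "symmetric_eq p x n \<beta> \<longleftrightarrow>
     is_bid_fn x \<beta> \<and>
     (\<forall>\<beta>'. is_bid_fn x \<beta>' \<longrightarrow>
        allpay_payoff p x (n - 1) \<beta>' (\<lambda>_. \<beta>) \<le> allpay_payoff p x (n - 1) \<beta> (\<lambda>_. \<beta>)) \<and>
     \<not> weakly_dominated p x (n - 1) \<beta>"

end

theory Submission
  imports Defs
begin

lemma pointwise_opt:
  fixes p :: "nat \<Rightarrow> real" and \<beta> :: "nat \<Rightarrow> nat"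
  assumes sym: "symmetric_eq p x n \<beta>" and pos: "\<forall>w\<le>x. p w > 0"
    and w: "w \<le> x" and b: "b \<le> x"
  shows "real w * win_prob p x (n-1) (\<lambda>_. \<beta>) b - real b
       \<le> real w * win_prob p x (n-1) (\<lambda>_. \<beta>) (\<beta> w) - real (\<beta> w)"
proof -
  let ?F = "win_prob p x (n-1) (\<lambda>_. \<beta>)"
  define \<beta>' where "\<beta>' = \<beta>(w := b)"
  have bf: "is_bid_fn x \<beta>" using sym by (simp add: symmetric_eq_def)
  have bf': "is_bid_fn x \<beta>'" using bf b by (auto simp: is_bid_fn_def \<beta>'_def)
  have le: "allpay_payoff p x (n - 1) \<beta>' (\<lambda>_. \<beta>) \<le> allpay_payoff p x (n - 1) \<beta> (\<lambda>_. \<beta>)"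
    using sym bf' by (simp add: symmetric_eq_def)
  define f where "f = (\<lambda>g v. p v * (real v * ?F (g v) - real (g v)))"
  have A: "allpay_payoff p x (n - 1) g (\<lambda>_. \<beta>) = f g w + (\<Sum>v\<in>{..x}-{w}. f g v)" for g
    unfolding allpay_payoff_def f_def using w by (subst sum.remove[of _ w]) auto
  have B: "(\<Sum>v\<in>{..x}-{w}. f \<beta>' v) = (\<Sum>v\<in>{..x}-{w}. f \<beta> v)"
    by (rule sum.cong) (auto simp: f_def \<beta>'_def)
  have "f \<beta>' w \<le> f \<beta> w" using le A[of \<beta>'] A[of \<beta>] B by simp
  hence "p w * (real w * ?F b - real b) \<le> p w * (real w * ?F (\<beta> w) - real (\<beta> w))"
    by (simp add: f_def \<beta>'_def)
  moreover have "p w > 0" using pos w by auto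
  ultimately show ?thesis by simp
qed

lemma win_prob_mono:
  fixes p :: "nat \<Rightarrow> real"
  assumes pos: "\<forall>w\<le>x. p w > 0" and "b \<le> b'"
  shows "win_prob p x m gs b \<le> win_prob p x m gs b'"
  unfolding win_prob_def
proof (rule prod_mono)
  fix j assume "j \<in> {..<m}"
  show "0 \<le> sum p {w \<in> {0..x}. gs j w < b} \<and>
        sum p {w \<in> {0..x}. gs j w < b} \<le> sum p {w \<in> {0..x}. gs j w < b'}"
  proof
    show "0 \<le> sum p {w \<in> {0..x}. gs j w < b}"
      using pos by (intro sum_nonneg) (auto simp: less_imp_le)
    show "sum p {w \<in> {0..x}. gs j w < b} \<le> sum p {w \<in> {0..x}. gs j w < b'}"
      using pos assms(2) by (intro sum_mono2) (auto simp: less_imp_le)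
  qed
qed

lemma beta_mono:
  fixes p :: "nat \<Rightarrow> real" and \<beta> :: "nat \<Rightarrow> nat"
  assumes sym: "symmetric_eq p x n \<beta>" and pos: "\<forall>w\<le>x. p w > 0"
    and "w \<le> w'" and "w' \<le> x"
  shows "\<beta> w \<le> \<beta> w'"
proof (rule ccontr)
  let ?F = "win_prob p x (n-1) (\<lambda>_. \<beta>)"
  assume "\<not> ?thesis"
  hence lt: "\<beta> w' < \<beta> w" by simp
  have bf: "is_bid_fn x \<beta>" using sym by (simp add: symmetric_eq_def)
  have wx: "w \<le> x" using assms by simp
  have bx: "\<beta> w \<le> x" "\<beta> w' \<le> x" using bf wx assms(4) by (auto simp: is_bid_fn_def)
  have 1: "real w * ?F (\<beta> w') - real (\<beta> w') \<le> real w * ?F (\<beta> w) - real (\<beta> w)"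
    using pointwise_opt[OF sym pos wx bx(2)] .
  have 2: "real w' * ?F (\<beta> w) - real (\<beta> w) \<le> real w' * ?F (\<beta> w') - real (\<beta> w')"
    using pointwise_opt[OF sym pos assms(4) bx(1)] .
  have m: "?F (\<beta> w') \<le> ?F (\<beta> w)" using win_prob_mono[OF pos] lt by simp
  have ww: "w < w'" using lt assms(3) by (cases "w = w'") auto
  define D where "D = ?F (\<beta> w) - ?F (\<beta> w')"
  have D0: "D \<ge> 0" using m by (simp add: D_def)
  have "(real w' - real w) * D \<le> 0"
    using 1 2 by (simp add: algebra_simps D_def)
  moreover have "real w' - real w > 0" using ww by simp
  ultimately have "D \<le> 0" by (simp add: mult_le_0_iff)
  hence "D = 0" using D0 by simp
  hence "real (\<beta> w) \<le> real (\<beta> w')" using 1 by (simp add: D_def)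
  thus False using lt by simp
qed

theorem lemma10:
  fixes p :: "nat \<Rightarrow> real" and x n v :: nat and \<beta> :: "nat \<Rightarrow> nat"
  assumes "n \<ge> 2"
    and "\<forall>w\<le>x. p w > 0"
    and "(\<Sum>w\<le>x. p w) = 1"
    and "symmetric_eq p x n \<beta>"
    and "v + 1 \<le> x"
  shows "\<beta> (v + 1) \<le> \<beta> v + 1"
proof (rule ccontr)
  let ?F = "win_prob p x (n-1) (\<lambda>_. \<beta>)"
  assume "\<not> ?thesis"
  hence c: "\<beta> v + 2 \<le> \<beta> (v+1)" by simp
  define c where "c = \<beta> (v+1)"
  have bf: "is_bid_fn x \<beta>" using assms(4) by (simp add: symmetric_eq_def)
  have cx: "c - 1 \<le> x" using bf assms(5) by (auto simp: is_bid_fn_def c_def)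
  have S: "{w \<in> {0..x}. \<beta> w < c} = {w \<in> {0..x}. \<beta> w < c - 1}"
  proof (intro set_eqI iffI)
    fix w assume w: "w \<in> {w \<in> {0..x}. \<beta> w < c}"
    show "w \<in> {w \<in> {0..x}. \<beta> w < c - 1}"
    proof (cases "w \<le> v")
      case True
      hence "\<beta> w \<le> \<beta> v" using beta_mono[OF assms(4) assms(2)] assms(5) by simp
      thus ?thesis using w c by (auto simp: c_def)
    next
      case False
      hence "\<beta> (v+1) \<le> \<beta> w" using beta_mono[OF assms(4) assms(2), of "v+1" w] w by auto
      thus ?thesis using w by (auto simp: c_def)
    qed
  qed auto
  have Feq: "?F (c - 1) = ?F c" unfolding win_prob_def using S by simp
  have "real (v+1) * ?F (c-1) - real (c-1) \<le> real (v+1) * ?F c - real c"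
    using pointwise_opt[OF assms(4) assms(2) assms(5) cx] by (simp add: c_def)
  moreover have "c \<ge> 1" using c by (simp add: c_def)
  ultimately show False using Feq by (simp add: of_nat_diff)
qed

end
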